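(* Let $r$ be a Hermitian symmetric polynomial in $n$ variables, let $t\mapsto z(t)$ be a holomorphic polynomial mapping $\mathbb{C}\to\mathbb{C}^n$, and let $z^*r$ denote the Hermitian symmetric polynomial in one variable $t\mapsto r(z(t),\overline{z(t)})$. Then: (i) if $r\in\mathcal{Q}(n)$ then $z^*r\in\mathcal{Q}(1)$; (ii) if $r\in\mathcal{Q}'(n)$ then $z^*r\in\mathcal{Q}'(1)$; (iii) for every integer $k\ge1$ and for $k=\infty$, if $r\in\mathcal{P}_k(n)$ then $z^*r\in\mathcal{P}_k(1)$.
   Context: A Hermitian symmetric polynomial in $n$ variables is $r(z,\overline w)=\sum c_{\alpha\beta}z^\alpha\overline w^\beta$ with $c_{\alpha\beta}=\overline{c_{\beta\alpha}}$. For a positive integer $k$, $r\in\mathcal{P}_k(n)$ if for every choice of $k$ points $z_1,\dots,z_k\in\mathbb{C}^n$ the $k\times k$ matrix $(r(z_i,\overline{z_j}))$ is non-negative definite. $r\in\mathcal{P}_\infty(n)$ if $r(z,\overline z)=\|h(z)\|^2$ for some holomorphic polynomial mapping $h$ (with values in some $\mathbb{C}^N$). $\mathcal{Q}(n)$: $r=\|F\|^2/\|G\|^2$ for holomorphic polynomial mappings $F,G$, $G\not\equiv0$. $\mathcal{Q}'(n)$: $r\in\mathcal{P}_1(n)$ and there exist $s\in\mathcal{P}_1(n)$, not identically $0$, and a holomorphic polynomial mapping $F$ with $rs=\|F\|^2$. *)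

theory Defs
  imports Complex_Main "HOL-Computational_Algebra.Polynomial"
begin

text \<open>Multi-indices are functions nat => nat; a multi-index in n variables
vanishes at every index >= n.  Points of C^n are functions nat => complex,
of which only the coordinates 0..n-1 are used.\<close>

type_synonym mindex = "nat \<Rightarrow> nat"

definition mono :: "nat \<Rightarrow> mindex \<Rightarrow> (nat \<Rightarrow> complex) \<Rightarrow> complex" where
  "mono n \<alpha> z = (\<Prod>i<n. z i ^ \<alpha> i)"

definition in_vars :: "nat \<Rightarrow> mindex \<Rightarrow> bool" where
  "in_vars n \<alpha> \<longleftrightarrow> (\<forall>i\<ge>n. \<alpha> i = 0)"

definition is_hpoly :: "nat \<Rightarrow> (mindex \<Rightarrow> complex) \<Rightarrow> bool" where
  "is_hpoly n a \<longleftrightarrow> finite {\<alpha>. a \<alpha> \<noteq> 0} \<and> (\<forall>\<alpha>. a \<alpha> \<noteq> 0 \<longrightarrow> in_vars n \<alpha>)"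

definition hpoly_eval :: "nat \<Rightarrow> (mindex \<Rightarrow> complex) \<Rightarrow> (nat \<Rightarrow> complex) \<Rightarrow> complex" where
  "hpoly_eval n a z = (\<Sum>\<alpha>\<in>{\<alpha>. a \<alpha> \<noteq> 0}. a \<alpha> * mono n \<alpha> z)"

definition is_hpoly_map :: "nat \<Rightarrow> nat \<Rightarrow> (nat \<Rightarrow> mindex \<Rightarrow> complex) \<Rightarrow> bool" where
  "is_hpoly_map n N h \<longleftrightarrow> (\<forall>j<N. is_hpoly n (h j))"

definition map_normsq :: "nat \<Rightarrow> nat \<Rightarrow> (nat \<Rightarrow> mindex \<Rightarrow> complex) \<Rightarrow> (nat \<Rightarrow> complex) \<Rightarrow> real" where
  "map_normsq n N h z = (\<Sum>j<N. (cmod (hpoly_eval n (h j) z))\<^sup>2)"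

text \<open>Hermitian symmetric polynomial r(z, conj w) = sum c_{ab} z^a conj(w)^b
in n variables, given by its coefficients.\<close>
definition is_herm :: "nat \<Rightarrow> (mindex \<Rightarrow> mindex \<Rightarrow> complex) \<Rightarrow> bool" where
  "is_herm n c \<longleftrightarrow> finite {(\<alpha>, \<beta>). c \<alpha> \<beta> \<noteq> 0}
     \<and> (\<forall>\<alpha> \<beta>. c \<alpha> \<beta> \<noteq> 0 \<longrightarrow> in_vars n \<alpha> \<and> in_vars n \<beta>)
     \<and> (\<forall>\<alpha> \<beta>. c \<alpha> \<beta> = cnj (c \<beta> \<alpha>))"

definition herm_eval :: "nat \<Rightarrow> (mindex \<Rightarrow> mindex \<Rightarrow> complex) \<Rightarrow> (nat \<Rightarrow> complex) \<Rightarrow> (nat \<Rightarrow> complex) \<Rightarrow> complex" where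
  "herm_eval n c z w = (\<Sum>(\<alpha>, \<beta>)\<in>{(\<alpha>, \<beta>). c \<alpha> \<beta> \<noteq> 0}. c \<alpha> \<beta> * mono n \<alpha> z * cnj (mono n \<beta> w))"

text \<open>P_k(n): for any k points z_1..z_k the matrix (r(z_i, conj z_j)) is
non-negative definite, i.e. v^* M v is real and >= 0 for every v in C^k.\<close>
definition Pk :: "nat \<Rightarrow> nat \<Rightarrow> (mindex \<Rightarrow> mindex \<Rightarrow> complex) \<Rightarrow> bool" where
  "Pk k n r \<longleftrightarrow> is_herm n r \<and>
     (\<forall>(pts :: nat \<Rightarrow> nat \<Rightarrow> complex) (v :: nat \<Rightarrow> complex).
        let q = (\<Sum>i<k. \<Sum>j<k. cnj (v i) * herm_eval n r (pts i) (pts j) * v j)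
        in Im q = 0 \<and> 0 \<le> Re q)"

definition Pinf :: "nat \<Rightarrow> (mindex \<Rightarrow> mindex \<Rightarrow> complex) \<Rightarrow> bool" where
  "Pinf n r \<longleftrightarrow> is_herm n r \<and>
     (\<exists>N h. is_hpoly_map n N h \<and> (\<forall>z. herm_eval n r z z = complex_of_real (map_normsq n N h z)))"

text \<open>Q(n): r = ||F||^2 / ||G||^2 with G not identically zero, read as
r(z, conj z) ||G(z)||^2 = ||F(z)||^2 for all z.\<close>
definition Qcl :: "nat \<Rightarrow> (mindex \<Rightarrow> mindex \<Rightarrow> complex) \<Rightarrow> bool" where
  "Qcl n r \<longleftrightarrow> is_herm n r \<and>
     (\<exists>N F M G. is_hpoly_map n N F \<and> is_hpoly_map n M G \<and>
        (\<exists>z. map_normsq n M G z \<noteq> 0) \<and>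
        (\<forall>z. herm_eval n r z z * complex_of_real (map_normsq n M G z)
               = complex_of_real (map_normsq n N F z)))"

definition Qcl' :: "nat \<Rightarrow> (mindex \<Rightarrow> mindex \<Rightarrow> complex) \<Rightarrow> bool" where
  "Qcl' n r \<longleftrightarrow> Pk 1 n r \<and>
     (\<exists>s N F. Pk 1 n s \<and> (\<exists>\<alpha> \<beta>. s \<alpha> \<beta> \<noteq> 0) \<and> is_hpoly_map n N F \<and>
        (\<forall>z. herm_eval n r z z * herm_eval n s z z = complex_of_real (map_normsq n N F z)))"

text \<open>The pullback z^*r by the polynomial map t -> (poly (zm 0) t, ..., poly (zm (n-1)) t):
q is z^*r iff q is a Hermitian symmetric polynomial in one variable with
q(t, conj s) = r(z(t), conj z(s)).\<close>
definition is_pullback :: "nat \<Rightarrow> (mindex \<Rightarrow> mindex \<Rightarrow> complex) \<Rightarrow> (nat \<Rightarrow> complex poly)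
     \<Rightarrow> (mindex \<Rightarrow> mindex \<Rightarrow> complex) \<Rightarrow> bool" where
  "is_pullback n r zm q \<longleftrightarrow> is_herm 1 q \<and>
     (\<forall>t s. herm_eval 1 q (\<lambda>_. t) (\<lambda>_. s)
            = herm_eval n r (\<lambda>i. poly (zm i) t) (\<lambda>i. poly (zm i) s))"

end

theory Submission
  imports Defs
begin

lemma mono1: "mono 1 \<alpha> x = x 0 ^ \<alpha> 0" by (simp add: mono_def)
lemma mono1S[simp]: "mono (Suc 0) \<alpha> x = x 0 ^ \<alpha> 0" by (simp add: mono_def)

definition e1 :: "nat \<Rightarrow> mindex" where "e1 k = (\<lambda>i. if i = 0 then k else 0)"

lemma inj_e1: "inj e1" unfolding inj_def e1_def by (metis)
lemma e1_0[simp]: "e1 k 0 = k" by (simp add: e1_def)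
lemma in_vars_e1[simp]: "in_vars 1 (e1 k)" "in_vars (Suc 0) (e1 k)" by (simp_all add: in_vars_def e1_def)
lemma in_vars1_eq: "in_vars 1 \<alpha> \<Longrightarrow> \<alpha> = e1 (\<alpha> 0)"
  by (auto simp: in_vars_def e1_def fun_eq_iff)

lemma hpoly_eval_superset:
  "finite S \<Longrightarrow> {\<alpha>. a \<alpha> \<noteq> 0} \<subseteq> S \<Longrightarrow> hpoly_eval n a z = (\<Sum>\<alpha>\<in>S. a \<alpha> * mono n \<alpha> z)"
  unfolding hpoly_eval_def by (rule sum.mono_neutral_left) auto

lemma herm_eval_superset:
  "finite S \<Longrightarrow> {(\<alpha>, \<beta>). c \<alpha> \<beta> \<noteq> 0} \<subseteq> S \<Longrightarrow>
   herm_eval n c z w = (\<Sum>(\<alpha>, \<beta>)\<in>S. c \<alpha> \<beta> * mono n \<alpha> z * cnj (mono n \<beta> w))"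
  unfolding herm_eval_def by (rule sum.mono_neutral_left) auto

definition of_upoly :: "complex poly \<Rightarrow> mindex \<Rightarrow> complex" where
  "of_upoly p \<alpha> = (if in_vars 1 \<alpha> then coeff p (\<alpha> 0) else 0)"

lemma of_upoly_supp: "{\<alpha>. of_upoly p \<alpha> \<noteq> 0} \<subseteq> e1 ` {..degree p}"
proof
  fix \<alpha> assume "\<alpha> \<in> {\<alpha>. of_upoly p \<alpha> \<noteq> 0}"
  then have "in_vars 1 \<alpha>" "coeff p (\<alpha> 0) \<noteq> 0" by (auto simp: of_upoly_def split: if_splits)
  then show "\<alpha> \<in> e1 ` {..degree p}" using in_vars1_eq le_degree by blast
qed

lemma of_upoly_hpoly: "is_hpoly 1 (of_upoly p)"
  unfolding is_hpoly_def
  using finite_subset[OF of_upoly_supp] by (auto simp: of_upoly_def split: if_splits)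

lemma of_upoly_eval: "hpoly_eval 1 (of_upoly p) x = poly p (x 0)"
proof -
  have "hpoly_eval 1 (of_upoly p) x = (\<Sum>\<alpha>\<in>e1 ` {..degree p}. of_upoly p \<alpha> * mono 1 \<alpha> x)"
    by (rule hpoly_eval_superset[OF _ of_upoly_supp]) simp
  also have "\<dots> = (\<Sum>k\<le>degree p. coeff p k * x 0 ^ k)"
    by (subst sum.reindex) (auto intro: inj_on_subset[OF inj_e1] simp: of_upoly_def mono1)
  also have "\<dots> = poly p (x 0)" by (simp add: poly_altdef)
  finally show ?thesis .
qed

definition hmat :: "(nat \<Rightarrow> nat \<Rightarrow> complex) \<Rightarrow> mindex \<Rightarrow> mindex \<Rightarrow> complex" where
  "hmat Q \<alpha> \<beta> = (if in_vars 1 \<alpha> \<and> in_vars 1 \<beta> then Q (\<alpha> 0) (\<beta> 0) else 0)"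

lemma hmat_supp:
  assumes "\<And>k l. Q k l \<noteq> 0 \<Longrightarrow> k \<le> K \<and> l \<le> K"
  shows "{(\<alpha>, \<beta>). hmat Q \<alpha> \<beta> \<noteq> 0} \<subseteq> (e1 ` {..K}) \<times> (e1 ` {..K})"
proof
  fix x assume "x \<in> {(\<alpha>, \<beta>). hmat Q \<alpha> \<beta> \<noteq> 0}"
  then obtain \<alpha> \<beta> where x: "x = (\<alpha>, \<beta>)" and h: "in_vars 1 \<alpha>" "in_vars 1 \<beta>" "Q (\<alpha> 0) (\<beta> 0) \<noteq> 0"
    by (auto simp: hmat_def split: if_splits)
  then show "x \<in> (e1 ` {..K}) \<times> (e1 ` {..K})"
    using assms[OF h(3)] in_vars1_eq[OF h(1)] in_vars1_eq[OF h(2)] by blast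
qed

lemma hmat_herm:
  assumes "\<And>k l. Q k l \<noteq> 0 \<Longrightarrow> k \<le> K \<and> l \<le> K" "\<And>k l. Q l k = cnj (Q k l)"
  shows "is_herm 1 (hmat Q)"
proof -
  have "finite {(\<alpha>, \<beta>). hmat Q \<alpha> \<beta> \<noteq> 0}"
    using finite_subset[OF hmat_supp[OF assms(1)]] by simp
  moreover have "\<forall>\<alpha> \<beta>. hmat Q \<alpha> \<beta> \<noteq> 0 \<longrightarrow> in_vars 1 \<alpha> \<and> in_vars 1 \<beta>"
    by (simp add: hmat_def)
  moreover have "\<forall>\<alpha> \<beta>. hmat Q \<alpha> \<beta> = cnj (hmat Q \<beta> \<alpha>)"
    unfolding hmat_def using assms(2) by (metis complex_cnj_zero)
  ultimately show ?thesis unfolding is_herm_def by blast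
qed

lemma hmat_eval:
  assumes "\<And>k l. Q k l \<noteq> 0 \<Longrightarrow> k \<le> K \<and> l \<le> K"
  shows "herm_eval 1 (hmat Q) x y = (\<Sum>k\<le>K. \<Sum>l\<le>K. Q k l * x 0 ^ k * cnj (y 0 ^ l))"
proof -
  have "herm_eval 1 (hmat Q) x y =
     (\<Sum>(\<alpha>, \<beta>)\<in>(e1 ` {..K}) \<times> (e1 ` {..K}). hmat Q \<alpha> \<beta> * mono 1 \<alpha> x * cnj (mono 1 \<beta> y))"
    by (rule herm_eval_superset[OF _ hmat_supp[OF assms]]) simp
  also have "\<dots> = (\<Sum>\<alpha>\<in>e1 ` {..K}. \<Sum>\<beta>\<in>e1 ` {..K}. hmat Q \<alpha> \<beta> * mono 1 \<alpha> x * cnj (mono 1 \<beta> y))"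
    by (simp add: sum.cartesian_product)
  also have "\<dots> = (\<Sum>k\<le>K. \<Sum>l\<le>K. Q k l * x 0 ^ k * cnj (y 0 ^ l))"
    by (subst sum.reindex, rule inj_on_subset[OF inj_e1], simp,
        subst sum.reindex, rule inj_on_subset[OF inj_e1], simp) (simp add: hmat_def mono1)
  finally show ?thesis .
qed

lemma poly_le: fixes p :: "complex poly" assumes "degree p \<le> K" shows "poly p x = (\<Sum>k\<le>K. coeff p k * x ^ k)"
proof -
  have "(\<Sum>k\<le>K. coeff p k * x ^ k) = (\<Sum>k\<le>degree p. coeff p k * x ^ k)"
    by (rule sum.mono_neutral_right) (use assms in \<open>auto simp: coeff_eq_0\<close>)
  then show ?thesis using poly_altdef[of p x] by simp
qed

definition Qc :: "'i set \<Rightarrow> ('i \<Rightarrow> 'i \<Rightarrow> complex) \<Rightarrow> ('i \<Rightarrow> complex poly) \<Rightarrow> nat \<Rightarrow> nat \<Rightarrow> complex" where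
  "Qc I w P k l = (\<Sum>i\<in>I. \<Sum>j\<in>I. w i j * coeff (P i) k * cnj (coeff (P j) l))"


lemma Qc_bound:
  assumes "\<And>i. i \<in> I \<Longrightarrow> degree (P i) \<le> K" "Qc I w P k l \<noteq> 0"
  shows "k \<le> K \<and> l \<le> K"
proof (rule ccontr)
  assume a: "\<not> (k \<le> K \<and> l \<le> K)"
  have "Qc I w P k l = 0"
  proof (cases "k \<le> K")
    case True
    then have "l > K" using a by simp
    then have "\<And>j. j \<in> I \<Longrightarrow> coeff (P j) l = 0" using assms(1) by (meson coeff_eq_0 le_less_trans)
    then show ?thesis by (simp add: Qc_def)
  next
    case False
    then have "\<And>j. j \<in> I \<Longrightarrow> coeff (P j) k = 0" using assms(1)
      by (meson coeff_eq_0 le_less_trans not_le)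
    then show ?thesis by (simp add: Qc_def)
  qed
  then show False using assms(2) by simp
qed

lemma Qc_sym:
  assumes "\<And>i j. i \<in> I \<Longrightarrow> j \<in> I \<Longrightarrow> w j i = cnj (w i j)"
  shows "Qc I w P l k = cnj (Qc I w P k l)"
proof -
  have "cnj (Qc I w P k l) = (\<Sum>i\<in>I. \<Sum>j\<in>I. w j i * coeff (P j) l * cnj (coeff (P i) k))"
    unfolding Qc_def cnj_sum by (intro sum.cong refl) (simp add: assms[symmetric] mult.commute)
  also have "\<dots> = Qc I w P l k" unfolding Qc_def by (rule sum.swap)
  finally show ?thesis by simp
qed

lemma Qc_eval:
  assumes "\<And>i. i \<in> I \<Longrightarrow> degree (P i) \<le> K"
  shows "(\<Sum>k\<le>K. \<Sum>l\<le>K. Qc I w P k l * x ^ k * cnj (y ^ l)) =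
         (\<Sum>i\<in>I. \<Sum>j\<in>I. w i j * poly (P i) x * cnj (poly (P j) y))"
proof -
  have "(\<Sum>i\<in>I. \<Sum>j\<in>I. w i j * poly (P i) x * cnj (poly (P j) y)) =
     (\<Sum>i\<in>I. \<Sum>j\<in>I. \<Sum>k\<le>K. \<Sum>l\<le>K. w i j * (coeff (P i) k * x ^ k) * cnj (coeff (P j) l * y ^ l))"
    by (intro sum.cong refl) (simp add: poly_le[OF assms] sum_distrib_left sum_distrib_right, rule sum.swap)
  also have "\<dots> = (\<Sum>i\<in>I. \<Sum>k\<le>K. \<Sum>j\<in>I. \<Sum>l\<le>K. w i j * (coeff (P i) k * x ^ k) * cnj (coeff (P j) l * y ^ l))"
    by (intro sum.cong refl, rule sum.swap)
  also have "\<dots> = (\<Sum>k\<le>K. \<Sum>i\<in>I. \<Sum>j\<in>I. \<Sum>l\<le>K. w i j * (coeff (P i) k * x ^ k) * cnj (coeff (P j) l * y ^ l))"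
    by (rule sum.swap)
  also have "\<dots> = (\<Sum>k\<le>K. \<Sum>i\<in>I. \<Sum>l\<le>K. \<Sum>j\<in>I. w i j * (coeff (P i) k * x ^ k) * cnj (coeff (P j) l * y ^ l))"
    by (intro sum.cong refl, rule sum.swap)
  also have "\<dots> = (\<Sum>k\<le>K. \<Sum>l\<le>K. \<Sum>i\<in>I. \<Sum>j\<in>I. w i j * (coeff (P i) k * x ^ k) * cnj (coeff (P j) l * y ^ l))"
    by (intro sum.cong refl, rule sum.swap)
  also have "\<dots> = (\<Sum>k\<le>K. \<Sum>l\<le>K. Qc I w P k l * x ^ k * cnj (y ^ l))"
    unfolding Qc_def by (simp add: sum_distrib_left sum_distrib_right mult_ac)
  finally show ?thesis by simp
qed

definition hc :: "'i set \<Rightarrow> ('i \<Rightarrow> 'i \<Rightarrow> complex) \<Rightarrow> ('i \<Rightarrow> complex poly) \<Rightarrow> mindex \<Rightarrow> mindex \<Rightarrow> complex"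
  where "hc I w P = hmat (Qc I w P)"

lemma hc_props:
  assumes "finite I" "\<And>i j. i \<in> I \<Longrightarrow> j \<in> I \<Longrightarrow> w j i = cnj (w i j)"
  shows "is_herm 1 (hc I w P)"
    "herm_eval 1 (hc I w P) x y = (\<Sum>i\<in>I. \<Sum>j\<in>I. w i j * poly (P i) (x 0) * cnj (poly (P j) (y 0)))"
proof -
  define K where "K = Max (insert 0 (degree ` P ` I))"
  have K: "\<And>i. i \<in> I \<Longrightarrow> degree (P i) \<le> K" unfolding K_def using assms(1) by simp
  have B: "\<And>k l. Qc I w P k l \<noteq> 0 \<Longrightarrow> k \<le> K \<and> l \<le> K" by (rule Qc_bound[OF K])
  have S: "\<And>k l. Qc I w P l k = cnj (Qc I w P k l)" by (rule Qc_sym[OF assms(2)])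
  show "is_herm 1 (hc I w P)" unfolding hc_def by (rule hmat_herm[OF B S])
  show "herm_eval 1 (hc I w P) x y = (\<Sum>i\<in>I. \<Sum>j\<in>I. w i j * poly (P i) (x 0) * cnj (poly (P j) (y 0)))"
  proof -
    have "herm_eval 1 (hmat (Qc I w P)) x y = (\<Sum>k\<le>K. \<Sum>l\<le>K. Qc I w P k l * x 0 ^ k * cnj (y 0 ^ l))"
      by (rule hmat_eval) (rule B)
    then show ?thesis unfolding hc_def by (simp only: Qc_eval[OF K])
  qed
qed

lemma of_upoly_evalS[simp]: "hpoly_eval (Suc 0) (of_upoly p) x = poly p (x 0)"
  using of_upoly_eval[of p x] by simp

definition monP :: "nat \<Rightarrow> mindex \<Rightarrow> (nat \<Rightarrow> 'a::comm_semiring_1 poly) \<Rightarrow> 'a poly" where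
  "monP n \<alpha> \<gamma> = (\<Prod>i<n. (\<gamma> i) ^ (\<alpha> i))"

lemma poly_monP: "poly (monP n \<alpha> \<gamma>) t = mono n \<alpha> (\<lambda>i. poly (\<gamma> i) t)"
  by (simp add: monP_def mono_def poly_prod)

definition compU :: "nat \<Rightarrow> (mindex \<Rightarrow> complex) \<Rightarrow> (nat \<Rightarrow> complex poly) \<Rightarrow> complex poly" where
  "compU n a \<gamma> = (\<Sum>\<alpha>\<in>{\<alpha>. a \<alpha> \<noteq> 0}. [:a \<alpha>:] * monP n \<alpha> \<gamma>)"

lemma poly_compU: "poly (compU n a \<gamma>) t = hpoly_eval n a (\<lambda>i. poly (\<gamma> i) t)"
  by (simp add: compU_def hpoly_eval_def poly_sum poly_monP)

lemma herm1_cong: "herm_eval 1 c x y = herm_eval 1 c (\<lambda>_. x 0) (\<lambda>_. y 0)"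
  unfolding herm_eval_def by (simp add: mono1)

lemma hpoly1_cong: "hpoly_eval 1 c x = hpoly_eval 1 c (\<lambda>_. x 0)"
  unfolding hpoly_eval_def by (simp add: mono1)

lemma pullback_exists:
  assumes "is_herm n r"
  shows "\<exists>q. is_pullback n r zm q"
proof -
  define S where "S = {(\<alpha>, \<beta>). r \<alpha> \<beta> \<noteq> 0}"
  define A where "A = fst ` S \<union> snd ` S"
  have fS: "finite S" using assms unfolding is_herm_def S_def by blast
  then have fA: "finite A" unfolding A_def by simp
  have SA: "S \<subseteq> A \<times> A" unfolding A_def by force
  have sym: "r j i = cnj (r i j)" for i j
  proof -
    have "r i j = cnj (r j i)" using assms unfolding is_herm_def by blast
    then show ?thesis by simp
  qed
  define q where "q = hc A r (\<lambda>a. monP n a zm)"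
  have "is_herm 1 q" unfolding q_def by (rule hc_props(1)[OF fA sym])
  moreover have "herm_eval 1 q (\<lambda>_. t) (\<lambda>_. s) = herm_eval n r (\<lambda>i. poly (zm i) t) (\<lambda>i. poly (zm i) s)" for t s
  proof -
    have "herm_eval 1 q (\<lambda>_. t) (\<lambda>_. s) = (\<Sum>a\<in>A. \<Sum>b\<in>A. r a b * mono n a (\<lambda>i. poly (zm i) t) * cnj (mono n b (\<lambda>i. poly (zm i) s)))"
      unfolding q_def hc_props(2)[OF fA sym] by (simp add: poly_monP)
    also have "\<dots> = (\<Sum>(a, b)\<in>A \<times> A. r a b * mono n a (\<lambda>i. poly (zm i) t) * cnj (mono n b (\<lambda>i. poly (zm i) s)))"
      by (simp add: sum.cartesian_product)
    also have "\<dots> = herm_eval n r (\<lambda>i. poly (zm i) t) (\<lambda>i. poly (zm i) s)"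
      by (rule herm_eval_superset[symmetric]) (use fA SA S_def in auto)
    finally show ?thesis .
  qed
  ultimately show ?thesis unfolding is_pullback_def by blast
qed

lemma pullback_eval:
  assumes "is_pullback n r zm q"
  shows "herm_eval 1 q x y = herm_eval n r (\<lambda>i. poly (zm i) (x 0)) (\<lambda>i. poly (zm i) (y 0))"
  using assms unfolding is_pullback_def by (subst herm1_cong) blast

lemma pullback_Pk:
  assumes "is_pullback n r zm q" "Pk k n r"
  shows "Pk k 1 q"
proof -
  have "is_herm 1 q" using assms(1) unfolding is_pullback_def by blast
  moreover have "let qq = (\<Sum>i<k. \<Sum>j<k. cnj (v i) * herm_eval 1 q (pts i) (pts j) * v j) in Im qq = 0 \<and> 0 \<le> Re qq"
    for pts :: "nat \<Rightarrow> nat \<Rightarrow> complex" and v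
  proof -
    define pts' where "pts' = (\<lambda>i j. poly (zm j) (pts i 0))"
    have "(\<Sum>i<k. \<Sum>j<k. cnj (v i) * herm_eval 1 q (pts i) (pts j) * v j) =
          (\<Sum>i<k. \<Sum>j<k. cnj (v i) * herm_eval n r (pts' i) (pts' j) * v j)"
      unfolding pts'_def pullback_eval[OF assms(1)] ..
    moreover have "let qq = (\<Sum>i<k. \<Sum>j<k. cnj (v i) * herm_eval n r (pts' i) (pts' j) * v j) in Im qq = 0 \<and> 0 \<le> Re qq"
      using assms(2) unfolding Pk_def by blast
    ultimately show ?thesis by simp
  qed
  ultimately show ?thesis unfolding Pk_def by blast
qed

lemma pullback_Pinf:
  assumes "is_pullback n r zm q" "Pinf n r"
  shows "Pinf 1 q"
proof -
  obtain N h where h: "is_hpoly_map n N h" "\<And>z. herm_eval n r z z = complex_of_real (map_normsq n N h z)"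
    using assms(2) unfolding Pinf_def by blast
  define H where "H = (\<lambda>j. of_upoly (compU n (h j) zm))"
  have "is_hpoly_map 1 N H" unfolding is_hpoly_map_def H_def using of_upoly_hpoly by blast
  moreover have "herm_eval 1 q z z = complex_of_real (map_normsq 1 N H z)" for z
    unfolding pullback_eval[OF assms(1)] h(2) map_normsq_def H_def
    by (simp add: of_upoly_eval poly_compU)
  moreover have "is_herm 1 q" using assms(1) unfolding is_pullback_def by blast
  ultimately show ?thesis unfolding Pinf_def by blast
qed

lemma regroup:
  fixes f :: "nat \<Rightarrow> nat \<Rightarrow> 'a::comm_ring_1"
  shows "(\<Sum>k\<le>K. \<Sum>l\<le>K. f k l * x ^ (k + l)) =
         (\<Sum>d\<le>2*K. x ^ d * (\<Sum>k\<le>K. \<Sum>l\<le>K. if k + l = d then f k l else 0))"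
proof -
  have "(\<Sum>d\<le>2*K. x ^ d * (\<Sum>k\<le>K. \<Sum>l\<le>K. if k + l = d then f k l else 0)) =
        (\<Sum>d\<le>2*K. \<Sum>k\<le>K. \<Sum>l\<le>K. if k + l = d then f k l * x ^ (k + l) else 0)"
    by (simp add: sum_distrib_left mult_ac if_distrib cong: if_cong)
  also have "\<dots> = (\<Sum>k\<le>K. \<Sum>d\<le>2*K. \<Sum>l\<le>K. if k + l = d then f k l * x ^ (k + l) else 0)"
    by (rule sum.swap)
  also have "\<dots> = (\<Sum>k\<le>K. \<Sum>l\<le>K. \<Sum>d\<le>2*K. if k + l = d then f k l * x ^ (k + l) else 0)"
    by (rule sum.cong[OF refl], rule sum.swap)
  also have "\<dots> = (\<Sum>k\<le>K. \<Sum>l\<le>K. f k l * x ^ (k + l))"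
    by (intro sum.cong refl) (simp add: sum.delta)
  finally show ?thesis by simp
qed

lemma coeff_sum_monoms:
  "coeff (\<Sum>d\<le>M. monom (c d) d) j = (if j \<le> M then c j else 0)"
  by (simp add: coeff_sum)

lemma poly_sum_monoms:
  fixes c :: "nat \<Rightarrow> complex"
  shows "poly (\<Sum>d\<le>M. monom (c d) d) x = (\<Sum>d\<le>M. c d * x ^ d)"
  by (simp add: poly_sum poly_monom)

lemma poly_zero_infinite:
  fixes p :: "complex poly"
  assumes "infinite S" "\<And>x. x \<in> S \<Longrightarrow> poly p x = 0"
  shows "p = 0"
proof (rule ccontr)
  assume "p \<noteq> 0"
  then have "finite {x. poly p x = 0}" by (rule poly_roots_finite)
  moreover have "S \<subseteq> {x. poly p x = 0}" using assms(2) by auto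
  ultimately show False using assms(1) finite_subset by blast
qed

definition mob :: "real \<Rightarrow> complex" where
  "mob x = (1 + \<i> * of_real x) / (1 - \<i> * of_real x)"

lemma mob_den: "1 - \<i> * complex_of_real x \<noteq> 0"
proof
  assume "1 - \<i> * complex_of_real x = 0"
  then have "Re (1 - \<i> * complex_of_real x) = 0" by simp
  then show False by simp
qed

lemma mob_norm: "cmod (mob x) = 1"
proof -
  have "cmod (1 + \<i> * of_real x) = cmod (1 - \<i> * of_real x)"
    by (simp add: cmod_def)
  then show ?thesis unfolding mob_def using mob_den by (simp add: norm_divide)
qed

lemma mob_inj: "inj mob"
proof
  fix x y assume "mob x = mob y"
  then have "(1 + \<i> * of_real x) * (1 - \<i> * of_real y) = (1 + \<i> * of_real y) * (1 - \<i> * of_real x)"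
    unfolding mob_def using mob_den[of x] mob_den[of y] by (simp add: divide_eq_eq field_simps)
  then have "2 * \<i> * (complex_of_real x - of_real y) = 0" by (simp add: algebra_simps)
  then show "x = y" by simp
qed

lemma unit_circle_infinite: "infinite {w::complex. cmod w = 1}"
proof
  assume "finite {w::complex. cmod w = 1}"
  moreover have "range mob \<subseteq> {w::complex. cmod w = 1}" using mob_norm by auto
  ultimately have "finite (range mob)" using finite_subset by blast
  then have "finite (UNIV :: real set)" using mob_inj finite_imageD by blast
  then show False using infinite_UNIV_char_0 by blast
qed

lemma herm1_identity:
  fixes Q :: "nat \<Rightarrow> nat \<Rightarrow> complex"
  assumes "\<And>t. (\<Sum>k\<le>K. \<Sum>l\<le>K. Q k l * t ^ k * cnj (t ^ l)) = 0"
    and "k0 \<le> K" "l0 \<le> K"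
  shows "Q k0 l0 = 0"
proof -
  define R where "R d w = (\<Sum>k\<le>K. \<Sum>l\<le>K. if k + l = d then Q k l * w ^ k * cnj w ^ l else 0)" for d w
  have R0: "R d w = 0" if "d \<le> 2*K" for d w
  proof -
    define p where "p = (\<Sum>d\<le>2*K. monom (R d w) d)"
    have "poly p (of_real x) = 0" for x :: real
    proof -
      have "poly p (of_real x) = (\<Sum>d\<le>2*K. R d w * of_real x ^ d)"
        unfolding p_def poly_sum_monoms ..
      also have "\<dots> = (\<Sum>k\<le>K. \<Sum>l\<le>K. (Q k l * w ^ k * cnj w ^ l) * of_real x ^ (k + l))"
        unfolding regroup R_def by (simp add: mult_ac)
      also have "\<dots> = (\<Sum>k\<le>K. \<Sum>l\<le>K. Q k l * (of_real x * w) ^ k * cnj ((of_real x * w) ^ l))"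
        by (intro sum.cong refl) (simp add: power_mult_distrib power_add mult_ac)
      also have "\<dots> = 0" by (rule assms(1))
      finally show ?thesis .
    qed
    moreover have "infinite (range (of_real :: real \<Rightarrow> complex))"
      using finite_imageD[of "of_real :: real \<Rightarrow> complex" UNIV] inj_of_real infinite_UNIV_char_0 by blast
    ultimately have "p = 0" by (intro poly_zero_infinite[of "range of_real"]) auto
    then have "coeff p d = 0" by simp
    then show ?thesis unfolding p_def coeff_sum_monoms using that by simp
  qed
  define d where "d = k0 + l0"
  define p where "p = (\<Sum>k\<le>K. monom (if k \<le> d \<and> d - k \<le> K then Q k (d - k) else 0) (2 * k))"
  have "poly p w = 0" if w: "cmod w = 1" for w
  proof -
    have wc: "w * cnj w = 1" using w by (simp add: complex_norm_square[symmetric])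
    have "poly p w = (\<Sum>k\<le>K. (if k \<le> d \<and> d - k \<le> K then Q k (d - k) else 0) * w ^ (2 * k))"
      unfolding p_def by (simp add: poly_sum poly_monom)
    also have "\<dots> = (\<Sum>k\<le>K. \<Sum>l\<le>K. if k + l = d then Q k l * w ^ (2*k) else 0)"
    proof (intro sum.cong refl)
      fix k assume "k \<in> {..K}"
      show "(if k \<le> d \<and> d - k \<le> K then Q k (d - k) else 0) * w ^ (2 * k) =
            (\<Sum>l\<le>K. if k + l = d then Q k l * w ^ (2 * k) else 0)"
      proof (cases "k \<le> d \<and> d - k \<le> K")
        case True
        then have "(\<Sum>l\<le>K. if k + l = d then Q k l * w ^ (2 * k) else 0) =
                   (\<Sum>l\<le>K. if l = d - k then Q k (d - k) * w ^ (2 * k) else 0)"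
          by (intro sum.cong refl) auto
        then show ?thesis using True by (simp add: sum.delta)
      next
        case False
        then have "(\<Sum>l\<le>K. if k + l = d then Q k l * w ^ (2 * k) else 0) = 0"
          by (intro sum.neutral) auto
        then show ?thesis using False by auto
      qed
    qed
    also have "\<dots> = (\<Sum>k\<le>K. \<Sum>l\<le>K. if k + l = d then Q k l * w ^ k * cnj w ^ l * w ^ d else 0)"
    proof (intro sum.cong refl)
      fix k l
      show "(if k + l = d then Q k l * w ^ (2*k) else 0) = (if k + l = d then Q k l * w ^ k * cnj w ^ l * w ^ d else 0)"
      proof (cases "k + l = d")
        case True
        have "w ^ k * cnj w ^ l * w ^ d = w ^ (2 * k) * (w * cnj w) ^ l"
          unfolding True[symmetric] by (simp add: power_add power_mult_distrib power_mult mult_ac power2_eq_square)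
        then have "w ^ k * cnj w ^ l * w ^ d = w ^ (2 * k)" using wc by simp
        then show ?thesis using True by (simp add: mult.assoc)
      qed simp
    qed
    also have "\<dots> = R d w * w ^ d"
      unfolding R_def sum_distrib_right by (intro sum.cong refl) simp
    also have "\<dots> = 0" using R0[of d w] \<open>k0 \<le> K\<close> \<open>l0 \<le> K\<close> d_def by simp
    finally show ?thesis .
  qed
  then have "p = 0" using unit_circle_infinite poly_zero_infinite by blast
  then have "coeff p (2 * k0) = 0" by simp
  moreover have "coeff p (2 * k0) = Q k0 l0"
  proof -
    have "coeff p (2 * k0) = (\<Sum>k\<le>K. if 2 * k = 2 * k0 then (if k \<le> d \<and> d - k \<le> K then Q k (d - k) else 0) else 0)"
      unfolding p_def coeff_sum by (intro sum.cong refl) simp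
    also have "\<dots> = (\<Sum>k\<le>K. if k = k0 then (if k \<le> d \<and> d - k \<le> K then Q k (d - k) else 0) else 0)"
      by (intro sum.cong refl) simp
    also have "\<dots> = Q k0 l0" using assms(2,3) by (simp add: sum.delta' d_def)
    finally show ?thesis .
  qed
  ultimately show ?thesis by simp
qed

lemma digit_sum_less:
  fixes N :: nat
  assumes "\<And>i. i < n \<Longrightarrow> a i < N"
  shows "(\<Sum>i<n. a i * N ^ i) < N ^ n"
  using assms
proof (induction n)
  case 0 then show ?case by simp
next
  case (Suc n)
  have "(\<Sum>i<Suc n. a i * N ^ i) = (\<Sum>i<n. a i * N ^ i) + a n * N ^ n" by simp
  also have "\<dots> < N ^ n + a n * N ^ n" using Suc by simp
  also have "\<dots> = (Suc (a n)) * N ^ n" by simp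
  also have "\<dots> \<le> N * N ^ n" using Suc.prems[of n] by (intro mult_right_mono) auto
  finally show ?case by simp
qed

lemma digit_inj:
  fixes N :: nat
  assumes "\<And>i. i < n \<Longrightarrow> a i < N" "\<And>i. i < n \<Longrightarrow> b i < N"
    and "(\<Sum>i<n. a i * N ^ i) = (\<Sum>i<n. b i * N ^ i)"
  shows "\<forall>i<n. a i = b i"
  using assms
proof (induction n)
  case 0 then show ?case by simp
next
  case (Suc n)
  define u where "u = (\<Sum>i<n. a i * N ^ i)"
  define v where "v = (\<Sum>i<n. b i * N ^ i)"
  have u: "u < N ^ n" unfolding u_def using Suc.prems(1) by (intro digit_sum_less) auto
  have v: "v < N ^ n" unfolding v_def using Suc.prems(2) by (intro digit_sum_less) auto
  have eq: "u + a n * N ^ n = v + b n * N ^ n" using Suc.prems(3) unfolding u_def v_def by simp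
  have Npos: "N > 0" using Suc.prems(1)[of n] by simp
  have "(u + a n * N ^ n) mod N ^ n = u" using u by simp
  moreover have "(v + b n * N ^ n) mod N ^ n = v" using v by simp
  ultimately have uv: "u = v" using eq by simp
  then have an: "a n = b n" using eq Npos by simp
  have "\<forall>i<n. a i = b i" using Suc.IH Suc.prems uv unfolding u_def v_def by auto
  then show ?case using an less_Suc_eq by auto
qed

lemma prod_monom_lessThan:
  fixes n :: nat and f :: "nat \<Rightarrow> nat"
  shows "(\<Prod>i<n. monom (1::'a::comm_semiring_1) (f i)) = monom 1 (\<Sum>i<n. f i)"
  by (induction n) (simp_all add: mult_monom)

lemma herm_nonzero:
  assumes "is_herm n s" "s a0 b0 \<noteq> 0"
  shows "\<exists>p. herm_eval n s p p \<noteq> 0"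
proof (rule ccontr)
  assume contra: "\<not> (\<exists>p. herm_eval n s p p \<noteq> 0)"
  define S where "S = {(\<alpha>, \<beta>). s \<alpha> \<beta> \<noteq> 0}"
  define A where "A = fst ` S \<union> snd ` S"
  have fS: "finite S" using assms unfolding is_herm_def S_def by blast
  then have fA: "finite A" unfolding A_def by simp
  have SA: "S \<subseteq> A \<times> A" unfolding A_def by force
  have a0: "a0 \<in> A" "b0 \<in> A" using assms(2) unfolding A_def S_def by force+
  have sym: "s j i = cnj (s i j)" for i j
  proof -
    have "s i j = cnj (s j i)" using assms unfolding is_herm_def by blast
    then show ?thesis by simp
  qed
  have hv: "\<And>\<alpha> \<beta>. s \<alpha> \<beta> \<noteq> 0 \<Longrightarrow> in_vars n \<alpha> \<and> in_vars n \<beta>"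
    using assms(1) unfolding is_herm_def by blast
  have vars: "in_vars n a" if "a \<in> A" for a
    using that hv unfolding A_def S_def by auto
  define N where "N = Suc (Max (insert 0 ((\<lambda>(a, i). a i) ` (A \<times> {..<n}))))"
  have Nbig: "a i < N" if "a \<in> A" "i < n" for a i
  proof -
    have "a i \<in> insert 0 ((\<lambda>(a, i). a i) ` (A \<times> {..<n}))" using that by force
    then have "a i \<le> Max (insert 0 ((\<lambda>(a, i). a i) ` (A \<times> {..<n})))" using fA by simp
    then show ?thesis unfolding N_def by simp
  qed
  define e where "e a = (\<Sum>i<n. a i * N ^ i)" for a
  have einj: "a = b" if "a \<in> A" "b \<in> A" "e a = e b" for a b
  proof -
    have "\<forall>i<n. a i = b i" by (rule digit_inj[of n a N b]) (use that Nbig e_def in auto)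
    moreover have "\<forall>i\<ge>n. a i = b i" using vars[OF that(1)] vars[OF that(2)] unfolding in_vars_def by simp
    ultimately show ?thesis by (intro ext) (metis not_le)
  qed
  define \<gamma> where "\<gamma> i = monom (1::complex) (N ^ i)" for i
  define P where "P a = monP n a \<gamma>" for a
  have Pm: "P a = monom 1 (e a)" for a
  proof -
    have "P a = (\<Prod>i<n. monom (1::complex) (a i * N ^ i))"
      unfolding P_def monP_def \<gamma>_def by (intro prod.cong refl) (simp add: monom_power mult.commute)
    also have "\<dots> = monom 1 (e a)" unfolding e_def by (rule prod_monom_lessThan)
    finally show ?thesis .
  qed
  define K where "K = Max (insert 0 (degree ` P ` A))"
  have K: "\<And>a. a \<in> A \<Longrightarrow> degree (P a) \<le> K" unfolding K_def using fA by simp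
  have "(\<Sum>k\<le>K. \<Sum>l\<le>K. Qc A s P k l * t ^ k * cnj (t ^ l)) = 0" for t
  proof -
    have "(\<Sum>k\<le>K. \<Sum>l\<le>K. Qc A s P k l * t ^ k * cnj (t ^ l)) =
          (\<Sum>a\<in>A. \<Sum>b\<in>A. s a b * poly (P a) t * cnj (poly (P b) t))"
      by (rule Qc_eval[OF K])
    also have "\<dots> = (\<Sum>(a, b)\<in>A \<times> A. s a b * mono n a (\<lambda>i. poly (\<gamma> i) t) * cnj (mono n b (\<lambda>i. poly (\<gamma> i) t)))"
      by (simp add: sum.cartesian_product P_def poly_monP)
    also have "\<dots> = herm_eval n s (\<lambda>i. poly (\<gamma> i) t) (\<lambda>i. poly (\<gamma> i) t)"
      by (rule herm_eval_superset[symmetric]) (use fA SA S_def in auto)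
    also have "\<dots> = 0" using contra by blast
    finally show ?thesis .
  qed
  moreover have "e a0 \<le> K" "e b0 \<le> K" using K[OF a0(1)] K[OF a0(2)] by (simp_all add: Pm degree_monom_eq)
  ultimately have "Qc A s P (e a0) (e b0) = 0" by (rule herm1_identity)
  moreover have "Qc A s P (e a0) (e b0) = s a0 b0"
  proof -
    have eiff: "(e a = e c) = (a = c)" if "a \<in> A" "c \<in> A" for a c using einj that by blast
    have "Qc A s P (e a0) (e b0) = (\<Sum>a\<in>A. \<Sum>b\<in>A. if a = a0 \<and> b = b0 then s a b else 0)"
      unfolding Qc_def Pm coeff_monom
    proof (intro sum.cong refl)
      fix a b assume "a \<in> A" "b \<in> A"
      then show "s a b * (if e a = e a0 then 1 else 0) * cnj (if e b = e b0 then 1 else 0) =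
            (if a = a0 \<and> b = b0 then s a b else 0)"
        using eiff[of a a0] eiff[of b b0] a0 by auto
    qed
    also have "\<dots> = (\<Sum>a\<in>A. if a = a0 then s a b0 else 0)"
    proof (intro sum.cong refl)
      fix a assume "a \<in> A"
      have "(\<Sum>b\<in>A. if a = a0 \<and> b = b0 then s a b else 0) = (\<Sum>b\<in>A. if b = b0 then (if a = a0 then s a b else 0) else 0)"
        by (intro sum.cong refl) auto
      also have "\<dots> = (if a = a0 then s a b0 else 0)" using a0 fA by (simp add: sum.delta')
      finally show "(\<Sum>b\<in>A. if a = a0 \<and> b = b0 then s a b else 0) = (if a = a0 then s a b0 else 0)" .
    qed
    also have "\<dots> = s a0 b0" using a0 fA by (simp add: sum.delta')
    finally show ?thesis .
  qed
  ultimately show False using assms(2) by simp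
qed

lemma abs_pow_sq: "(\<bar>\<epsilon>::real\<bar> ^ m)\<^sup>2 = \<epsilon> ^ (2 * m)"
proof -
  have "(\<bar>\<epsilon>\<bar> ^ m)\<^sup>2 = \<bar>\<epsilon>\<bar> ^ (m * 2)" by (rule power_mult[symmetric])
  also have "\<dots> = \<bar>\<epsilon>\<bar> ^ (2 * m)" by (simp only: mult.commute)
  also have "\<dots> = (\<bar>\<epsilon>\<bar>\<^sup>2) ^ m" by (rule power_mult)
  also have "\<dots> = (\<epsilon>\<^sup>2) ^ m" by simp
  also have "\<dots> = \<epsilon> ^ (2 * m)" by (rule power_mult[symmetric])
  finally show ?thesis .
qed

lemma shift_decomp:
  fixes p :: "complex poly"
  assumes "\<And>k. k < m \<Longrightarrow> coeff p k = 0"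
  shows "poly p x = x ^ m * poly (poly_shift m p) x"
proof -
  have "p = monom 1 m * poly_shift m p"
    by (rule poly_eqI) (auto simp: coeff_monom_mult coeff_poly_shift assms)
  then have "poly p x = poly (monom 1 m * poly_shift m p) x" by simp
  then show ?thesis by (simp add: poly_monom)
qed

lemma shift0: "poly (poly_shift m p) 0 = coeff p m"
  by (simp add: poly_0_coeff_0 coeff_poly_shift)

lemma tendsto_shift:
  fixes p :: "complex poly"
  assumes "\<And>k. k < m \<Longrightarrow> coeff p k = 0"
  shows "((\<lambda>\<epsilon>::real. poly p (of_real \<epsilon>) / of_real \<epsilon> ^ m) \<longlongrightarrow> coeff p m) (at 0)"
proof -
  have "((\<lambda>\<epsilon>::real. poly (poly_shift m p) (of_real \<epsilon>)) \<longlongrightarrow> poly (poly_shift m p) (of_real 0)) (at 0)"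
    by (intro tendsto_intros)
  then have lim: "((\<lambda>\<epsilon>::real. poly (poly_shift m p) (of_real \<epsilon>)) \<longlongrightarrow> coeff p m) (at 0)"
    by (simp add: shift0)
  have "\<forall>\<^sub>F \<epsilon> in at (0::real). poly (poly_shift m p) (of_real \<epsilon>) = poly p (of_real \<epsilon>) / of_real \<epsilon> ^ m"
    unfolding eventually_at_filter by (auto simp: shift_decomp[OF assms])
  then show ?thesis using lim by (rule Lim_transform_eventually[rotated])
qed

lemma core_limit:
  fixes A B :: "real \<Rightarrow> complex" and fs :: "nat \<Rightarrow> complex poly"
  assumes A: "(A \<longlongrightarrow> a) (at 0)"
    and B: "((\<lambda>\<epsilon>. B \<epsilon> / of_real \<epsilon> ^ (2 * m)) \<longlongrightarrow> b) (at 0)"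
    and eq: "\<And>\<epsilon>. A \<epsilon> * B \<epsilon> = of_real (\<Sum>j<N. (cmod (poly (fs j) (of_real \<epsilon>)))\<^sup>2)"
  shows "of_real (\<Sum>j<N. (cmod (coeff (fs j) m))\<^sup>2) = a * b"
proof -
  define R where "R \<epsilon> = (\<Sum>j<N. (cmod (poly (fs j) (of_real \<epsilon>)))\<^sup>2) / \<epsilon> ^ (2 * m)" for \<epsilon> :: real
  have "\<forall>\<^sub>F \<epsilon> in at (0::real). A \<epsilon> * (B \<epsilon> / of_real \<epsilon> ^ (2 * m)) = of_real (R \<epsilon>)"
    unfolding eventually_at_filter
  proof (intro always_eventually allI impI)
    fix \<epsilon> :: real assume "\<epsilon> \<noteq> 0"
    have "A \<epsilon> * (B \<epsilon> / of_real \<epsilon> ^ (2 * m)) = (A \<epsilon> * B \<epsilon>) / of_real \<epsilon> ^ (2 * m)" by simp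
    also have "\<dots> = of_real (\<Sum>j<N. (cmod (poly (fs j) (of_real \<epsilon>)))\<^sup>2) / of_real (\<epsilon> ^ (2 * m))"
      unfolding eq by simp
    also have "\<dots> = of_real (R \<epsilon>)" unfolding R_def of_real_divide ..
    finally show "A \<epsilon> * (B \<epsilon> / of_real \<epsilon> ^ (2 * m)) = of_real (R \<epsilon>)" .
  qed
  moreover have "((\<lambda>\<epsilon>. A \<epsilon> * (B \<epsilon> / of_real \<epsilon> ^ (2 * m))) \<longlongrightarrow> a * b) (at 0)"
    by (intro tendsto_mult A B)
  ultimately have LR: "((\<lambda>\<epsilon>. complex_of_real (R \<epsilon>)) \<longlongrightarrow> a * b) (at 0)"
    by (rule Lim_transform_eventually[rotated])
  then have Rlim: "(R \<longlongrightarrow> Re (a * b)) (at 0)"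
    using tendsto_Re by fastforce
  have low: "coeff (fs j) k = 0" if j: "j < N" and k: "k < m" for j k
  proof (rule ccontr)
    assume nz: "coeff (fs j) k \<noteq> 0"
    define k0 where "k0 = (LEAST k. coeff (fs j) k \<noteq> 0)"
    have k0: "coeff (fs j) k0 \<noteq> 0" "k0 \<le> k" unfolding k0_def using nz by (rule LeastI, rule Least_le)
    have below: "coeff (fs j) i = 0" if "i < k0" for i using that not_less_Least unfolding k0_def by blast
    define u where "u = poly_shift k0 (fs j)"
    define g where "g \<epsilon> = (cmod (poly u (of_real \<epsilon>)))\<^sup>2" for \<epsilon> :: real
    have glim: "(g \<longlongrightarrow> (cmod (coeff (fs j) k0))\<^sup>2) (at 0)"
    proof -
      have "((\<lambda>\<epsilon>::real. poly u (of_real \<epsilon>)) \<longlongrightarrow> poly u (of_real 0)) (at 0)"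
        by (intro tendsto_intros)
      then have "(g \<longlongrightarrow> (cmod (poly u (of_real 0)))\<^sup>2) (at 0)"
        unfolding g_def by (intro tendsto_intros)
      then show ?thesis unfolding u_def by (simp add: shift0)
    qed
    define h where "h \<epsilon> = \<epsilon> ^ (2 * (m - k0)) * R \<epsilon>" for \<epsilon> :: real
    have hlim: "(h \<longlongrightarrow> 0) (at 0)"
    proof -
      have "((\<lambda>\<epsilon>::real. \<epsilon> ^ (2 * (m - k0))) \<longlongrightarrow> 0 ^ (2 * (m - k0))) (at 0)"
        by (intro tendsto_intros)
      then have "((\<lambda>\<epsilon>::real. \<epsilon> ^ (2 * (m - k0))) \<longlongrightarrow> 0) (at 0)" using k0(2) k by simp
      then show ?thesis unfolding h_def using tendsto_mult[OF _ Rlim] by fastforce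
    qed
    have gh: "\<forall>\<^sub>F \<epsilon> in at (0::real). g \<epsilon> \<le> h \<epsilon>"
      unfolding eventually_at_filter
    proof (intro always_eventually allI impI)
      fix \<epsilon> :: real assume "\<epsilon> \<noteq> 0"
      have "(cmod (poly (fs j) (of_real \<epsilon>)))\<^sup>2 \<le> (\<Sum>j<N. (cmod (poly (fs j) (of_real \<epsilon>)))\<^sup>2)"
        using j by (intro member_le_sum) auto
      moreover have "(cmod (poly (fs j) (of_real \<epsilon>)))\<^sup>2 = \<epsilon> ^ (2 * k0) * g \<epsilon>"
      proof -
        have "cmod (poly (fs j) (of_real \<epsilon>)) = \<bar>\<epsilon>\<bar> ^ k0 * cmod (poly u (of_real \<epsilon>))"
          unfolding u_def using shift_decomp[of k0 "fs j" "of_real \<epsilon>"] below by (simp add: norm_mult norm_power)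
        then have "(cmod (poly (fs j) (of_real \<epsilon>)))\<^sup>2 = (\<bar>\<epsilon>\<bar> ^ k0)\<^sup>2 * g \<epsilon>"
          unfolding g_def by (simp only: power_mult_distrib)
        then show ?thesis by (simp only: abs_pow_sq)
      qed
      ultimately have "\<epsilon> ^ (2 * k0) * g \<epsilon> \<le> \<epsilon> ^ (2 * m) * R \<epsilon>"
        unfolding R_def using \<open>\<epsilon> \<noteq> 0\<close> by simp
      also have "\<epsilon> ^ (2 * m) = \<epsilon> ^ (2 * k0) * \<epsilon> ^ (2 * (m - k0))"
      proof -
        have "2 * m = 2 * k0 + 2 * (m - k0)" using k0(2) k by simp
        then show ?thesis by (metis power_add)
      qed
      finally have "\<epsilon> ^ (2 * k0) * g \<epsilon> \<le> \<epsilon> ^ (2 * k0) * h \<epsilon>" unfolding h_def by (simp add: mult.assoc)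
      moreover have "\<epsilon> ^ (2 * k0) > 0" using \<open>\<epsilon> \<noteq> 0\<close>
        by (simp add: power_mult zero_less_power2 del: power2_eq_square)
      ultimately show "g \<epsilon> \<le> h \<epsilon>" by simp
    qed
    have g0: "\<forall>\<^sub>F \<epsilon> in at (0::real). 0 \<le> g \<epsilon>" unfolding g_def by simp
    have "(g \<longlongrightarrow> 0) (at 0)" by (rule tendsto_sandwich[OF g0 gh tendsto_const hlim])
    with glim have "(cmod (coeff (fs j) k0))\<^sup>2 = 0" using tendsto_unique at_neq_bot by blast
    then show False using k0(1) by simp
  qed
  have "((\<lambda>\<epsilon>. \<Sum>j<N. (cmod (poly (fs j) (of_real \<epsilon>) / of_real \<epsilon> ^ m))\<^sup>2) \<longlongrightarrow>
         (\<Sum>j<N. (cmod (coeff (fs j) m))\<^sup>2)) (at (0::real))"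
    by (intro tendsto_intros tendsto_shift) (use low in auto)
  moreover have "\<forall>\<^sub>F \<epsilon> in at (0::real). (\<Sum>j<N. (cmod (poly (fs j) (of_real \<epsilon>) / of_real \<epsilon> ^ m))\<^sup>2) = R \<epsilon>"
    unfolding eventually_at_filter
  proof (intro always_eventually allI impI)
    fix \<epsilon> :: real assume "\<epsilon> \<noteq> 0"
    have "(\<Sum>j<N. (cmod (poly (fs j) (of_real \<epsilon>) / of_real \<epsilon> ^ m))\<^sup>2) =
          (\<Sum>j<N. (cmod (poly (fs j) (of_real \<epsilon>)))\<^sup>2 / (\<bar>\<epsilon>\<bar> ^ m)\<^sup>2)"
      by (simp add: norm_divide norm_power power_divide)
    also have "\<dots> = R \<epsilon>" unfolding R_def abs_pow_sq sum_divide_distrib ..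
    finally show "(\<Sum>j<N. (cmod (poly (fs j) (of_real \<epsilon>) / of_real \<epsilon> ^ m))\<^sup>2) = R \<epsilon>" .
  qed
  ultimately have "(R \<longlongrightarrow> (\<Sum>j<N. (cmod (coeff (fs j) m))\<^sup>2)) (at 0)"
    by (rule Lim_transform_eventually)
  then have "((\<lambda>\<epsilon>. complex_of_real (R \<epsilon>)) \<longlongrightarrow> of_real (\<Sum>j<N. (cmod (coeff (fs j) m))\<^sup>2)) (at 0)"
    by (intro tendsto_intros)
  with LR show ?thesis using tendsto_unique at_neq_bot by blast
qed

definition Gam :: "(nat \<Rightarrow> complex poly) \<Rightarrow> (nat \<Rightarrow> complex) \<Rightarrow> nat \<Rightarrow> complex poly poly" where
  "Gam zm c i = pCons (zm i) [: [:c i:] :]"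

definition phi :: "complex \<Rightarrow> complex poly poly \<Rightarrow> complex poly" where
  "phi t P = map_poly (\<lambda>q. poly q t) P"

lemma poly_phi: "poly (phi t P) e = poly (poly P [:e:]) t"
  unfolding phi_def
proof (induction P rule: pCons_induct)
  case 0 then show ?case by simp
next
  case (pCons a P)
  then show ?case by (simp add: map_poly_pCons)
qed

lemma coeff_phi: "coeff (phi t P) k = poly (coeff P k) t"
  unfolding phi_def by (simp add: coeff_map_poly)

definition compB :: "nat \<Rightarrow> (mindex \<Rightarrow> complex) \<Rightarrow> (nat \<Rightarrow> complex poly poly) \<Rightarrow> complex poly poly" where
  "compB n a \<Gamma> = (\<Sum>\<alpha>\<in>{\<alpha>. a \<alpha> \<noteq> 0}. [:[:a \<alpha>:]:] * monP n \<alpha> \<Gamma>)"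

lemma poly_Gam: "poly (poly (Gam zm c i) [:e:]) t = poly (zm i) t + e * c i"
  unfolding Gam_def by (simp add: algebra_simps)

lemma poly_monP2: "poly (poly (monP n \<alpha> \<Gamma>) [:e:]) t = mono n \<alpha> (\<lambda>i. poly (poly (\<Gamma> i) [:e:]) t)"
  by (simp add: monP_def mono_def poly_prod)

lemma poly_compB: "poly (phi t (compB n a (Gam zm c))) e = hpoly_eval n a (\<lambda>i. poly (zm i) t + e * c i)"
  unfolding poly_phi compB_def hpoly_eval_def
  by (simp add: poly_sum poly_monP2 poly_Gam)

lemma herm_isCont:
  "isCont (\<lambda>\<epsilon>::real. herm_eval n r (\<lambda>i. u i + of_real \<epsilon> * c i) (\<lambda>i. u i + of_real \<epsilon> * c i)) \<epsilon>0"
  unfolding herm_eval_def mono_def split_def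
  by (intro continuous_intros)

lemma sq_limit:
  fixes gs :: "nat \<Rightarrow> complex poly"
  assumes "\<And>j k. j < M \<Longrightarrow> k < m \<Longrightarrow> coeff (gs j) k = 0"
  shows "((\<lambda>\<epsilon>::real. of_real (\<Sum>j<M. (cmod (poly (gs j) (of_real \<epsilon>)))\<^sup>2) / of_real \<epsilon> ^ (2 * m))
          \<longlongrightarrow> complex_of_real (\<Sum>j<M. (cmod (coeff (gs j) m))\<^sup>2)) (at 0)"
proof -
  have sh: "((\<lambda>\<epsilon>::real. poly (gs j) (of_real \<epsilon>) / of_real \<epsilon> ^ m) \<longlongrightarrow> coeff (gs j) m) (at 0)"
    if "j \<in> {..<M}" for j
    by (rule tendsto_shift) (use assms that in auto)
  have "((\<lambda>\<epsilon>. \<Sum>j<M. (cmod (poly (gs j) (of_real \<epsilon>) / of_real \<epsilon> ^ m))\<^sup>2) \<longlongrightarrow>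
         (\<Sum>j<M. (cmod (coeff (gs j) m))\<^sup>2)) (at (0::real))"
    by (intro tendsto_sum tendsto_power tendsto_norm sh)
  then have lim: "((\<lambda>\<epsilon>. complex_of_real (\<Sum>j<M. (cmod (poly (gs j) (of_real \<epsilon>) / of_real \<epsilon> ^ m))\<^sup>2)) \<longlongrightarrow>
         complex_of_real (\<Sum>j<M. (cmod (coeff (gs j) m))\<^sup>2)) (at (0::real))"
    by (rule tendsto_of_real)
  have "\<forall>\<^sub>F \<epsilon> in at (0::real). complex_of_real (\<Sum>j<M. (cmod (poly (gs j) (of_real \<epsilon>) / of_real \<epsilon> ^ m))\<^sup>2)
      = of_real (\<Sum>j<M. (cmod (poly (gs j) (of_real \<epsilon>)))\<^sup>2) / of_real \<epsilon> ^ (2 * m)"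
    unfolding eventually_at_filter
  proof (intro always_eventually allI impI)
    fix \<epsilon> :: real assume "\<epsilon> \<noteq> 0"
    have "(\<Sum>j<M. (cmod (poly (gs j) (of_real \<epsilon>) / of_real \<epsilon> ^ m))\<^sup>2) =
          (\<Sum>j<M. (cmod (poly (gs j) (of_real \<epsilon>)))\<^sup>2 / (\<bar>\<epsilon>\<bar> ^ m)\<^sup>2)"
      by (simp add: norm_divide norm_power power_divide)
    also have "\<dots> = (\<Sum>j<M. (cmod (poly (gs j) (of_real \<epsilon>)))\<^sup>2) / \<epsilon> ^ (2 * m)"
      unfolding abs_pow_sq sum_divide_distrib ..
    finally show "complex_of_real (\<Sum>j<M. (cmod (poly (gs j) (of_real \<epsilon>) / of_real \<epsilon> ^ m))\<^sup>2)
      = of_real (\<Sum>j<M. (cmod (poly (gs j) (of_real \<epsilon>)))\<^sup>2) / of_real \<epsilon> ^ (2 * m)" by simp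
  qed
  with lim show ?thesis by (rule Lim_transform_eventually)
qed

lemma hp_of_upoly_map: "is_hpoly_map 1 N (\<lambda>j. of_upoly (P j))"
  unfolding is_hpoly_map_def using of_upoly_hpoly by blast

lemma normsq_of_upoly: "map_normsq 1 N (\<lambda>j. of_upoly (P j)) z = (\<Sum>j<N. (cmod (poly (P j) (z 0)))\<^sup>2)"
  unfolding map_normsq_def by (simp add: of_upoly_eval)

lemma normsq_pos:
  fixes f :: "nat \<Rightarrow> real"
  assumes "j1 < M" "f j1 \<noteq> 0"
  shows "(\<Sum>j<M. (f j)\<^sup>2) \<noteq> 0"
proof -
  have "(f j1)\<^sup>2 \<le> (\<Sum>j<M. (f j)\<^sup>2)" using assms(1) by (intro member_le_sum) auto
  moreover have "(f j1)\<^sup>2 > 0" using assms(2) by simp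
  ultimately show ?thesis by linarith
qed

lemma normsq_nz_ex:
  fixes f :: "nat \<Rightarrow> complex"
  assumes "(\<Sum>j<M. (cmod (f j))\<^sup>2) \<noteq> 0"
  shows "\<exists>j<M. f j \<noteq> 0"
  using assms by (metis (no_types, lifting) lessThan_iff norm_zero power_zero_numeral sum.neutral)

lemma pullback_Q:
  assumes pb: "is_pullback n r zm q" and Q: "Qcl n r"
  shows "Qcl 1 q"
proof -
  obtain N F M G where F: "is_hpoly_map n N F" and G: "is_hpoly_map n M G"
    and ex: "\<exists>z. map_normsq n M G z \<noteq> 0"
    and idt: "\<And>z. herm_eval n r z z * complex_of_real (map_normsq n M G z) = complex_of_real (map_normsq n N F z)"
    using Q unfolding Qcl_def by blast
  obtain p where p: "map_normsq n M G p \<noteq> 0" using ex by blast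
  define c where "c i = p i - poly (zm i) 0" for i
  define Gb where "Gb j = compB n (G j) (Gam zm c)" for j
  define Fb where "Fb j = compB n (F j) (Gam zm c)" for j
  have pG: "poly (phi t (Gb j)) e = hpoly_eval n (G j) (\<lambda>i. poly (zm i) t + e * c i)" for t e j
    unfolding Gb_def by (rule poly_compB)
  have pF: "poly (phi t (Fb j)) e = hpoly_eval n (F j) (\<lambda>i. poly (zm i) t + e * c i)" for t e j
    unfolding Fb_def by (rule poly_compB)
  have p1: "(\<lambda>i. poly (zm i) 0 + 1 * c i) = p" unfolding c_def by auto
  obtain j0 where j0: "j0 < M" "hpoly_eval n (G j0) p \<noteq> 0"
    using normsq_nz_ex[where M=M and f="\<lambda>j. hpoly_eval n (G j) p"] p unfolding map_normsq_def by blast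
  have "poly (phi 0 (Gb j0)) 1 \<noteq> 0" using j0(2) unfolding pG p1 .
  then have "Gb j0 \<noteq> 0" by (auto simp: phi_def)
  then obtain k where "coeff (Gb j0) k \<noteq> 0" by (metis leading_coeff_0_iff)
  then have exk: "\<exists>k. \<exists>j<M. coeff (Gb j) k \<noteq> 0" using j0(1) by blast
  define m where "m = (LEAST k. \<exists>j<M. coeff (Gb j) k \<noteq> 0)"
  have "\<exists>j<M. coeff (Gb j) m \<noteq> 0" unfolding m_def using exk by (rule LeastI_ex)
  then obtain j1 where j1: "j1 < M" "coeff (Gb j1) m \<noteq> 0" by blast
  have low: "coeff (Gb j) k = 0" if "j < M" "k < m" for j k
    using not_less_Least[of k "\<lambda>k. \<exists>j<M. coeff (Gb j) k \<noteq> 0"] that unfolding m_def by blast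
  obtain t0 where t0: "poly (coeff (Gb j1) m) t0 \<noteq> 0" using j1(2) poly_all_0_iff_0 by blast
  define F' where "F' j = of_upoly (coeff (Fb j) m)" for j
  define G' where "G' j = of_upoly (coeff (Gb j) m)" for j
  have hF': "is_hpoly_map 1 N F'" unfolding F'_def by (rule hp_of_upoly_map)
  have hG': "is_hpoly_map 1 M G'" unfolding G'_def by (rule hp_of_upoly_map)
  have nzG': "\<exists>z. map_normsq 1 M G' z \<noteq> 0"
  proof
    show "map_normsq 1 M G' (\<lambda>_. t0) \<noteq> 0"
      unfolding G'_def normsq_of_upoly using j1(1) t0 by (intro normsq_pos) auto
  qed
  have main: "herm_eval 1 q z z * complex_of_real (map_normsq 1 M G' z) = complex_of_real (map_normsq 1 N F' z)" for z
  proof -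
    define t where "t = z 0"
    define zt where "zt = (\<lambda>i. poly (zm i) t)"
    define ze where "ze \<epsilon> = (\<lambda>i. poly (zm i) t + complex_of_real \<epsilon> * c i)" for \<epsilon> :: real
    define A where "A \<epsilon> = herm_eval n r (ze \<epsilon>) (ze \<epsilon>)" for \<epsilon> :: real
    define B where "B \<epsilon> = complex_of_real (\<Sum>j<M. (cmod (poly (phi t (Gb j)) (of_real \<epsilon>)))\<^sup>2)" for \<epsilon> :: real
    have "isCont A 0" unfolding A_def ze_def by (rule herm_isCont)
    then have "(A \<longlongrightarrow> A 0) (at 0)" by (rule isContD)
    moreover have "A 0 = herm_eval n r zt zt" unfolding A_def ze_def zt_def by simp
    ultimately have Alim: "(A \<longlongrightarrow> herm_eval n r zt zt) (at 0)" by simp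
    have Blim: "((\<lambda>\<epsilon>. B \<epsilon> / of_real \<epsilon> ^ (2 * m)) \<longlongrightarrow>
        complex_of_real (\<Sum>j<M. (cmod (coeff (phi t (Gb j)) m))\<^sup>2)) (at 0)"
      unfolding B_def by (rule sq_limit) (simp add: coeff_phi low)
    have eq: "A \<epsilon> * B \<epsilon> = of_real (\<Sum>j<N. (cmod (poly (phi t (Fb j)) (of_real \<epsilon>)))\<^sup>2)" for \<epsilon>
      using idt[of "ze \<epsilon>"] unfolding A_def B_def map_normsq_def pG pF ze_def by simp
    have "of_real (\<Sum>j<N. (cmod (coeff (phi t (Fb j)) m))\<^sup>2) =
          herm_eval n r zt zt * complex_of_real (\<Sum>j<M. (cmod (coeff (phi t (Gb j)) m))\<^sup>2)"
      by (rule core_limit[OF Alim Blim eq])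
    moreover have "herm_eval 1 q z z = herm_eval n r zt zt"
      unfolding pullback_eval[OF pb] zt_def t_def ..
    ultimately show ?thesis
      unfolding F'_def G'_def normsq_of_upoly coeff_phi t_def by simp
  qed
  have "is_herm 1 q" using pb unfolding is_pullback_def by blast
  then show ?thesis unfolding Qcl_def using hF' hG' nzG' main by blast
qed

lemma expand_sum:
  fixes w :: "'i \<Rightarrow> 'i \<Rightarrow> complex" and X Y :: "'i \<Rightarrow> nat \<Rightarrow> complex"
  shows "(\<Sum>a\<in>A. \<Sum>b\<in>A. w a b * (\<Sum>k\<le>K. X a k * e ^ k) * (\<Sum>l\<le>K. Y b l * e ^ l)) =
    (\<Sum>d\<le>2*K. e ^ d * (\<Sum>a\<in>A. \<Sum>b\<in>A. \<Sum>k\<le>K. \<Sum>l\<le>K. if k + l = d then w a b * X a k * Y b l else 0))"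
proof -
  have "(\<Sum>a\<in>A. \<Sum>b\<in>A. w a b * (\<Sum>k\<le>K. X a k * e ^ k) * (\<Sum>l\<le>K. Y b l * e ^ l)) =
        (\<Sum>a\<in>A. \<Sum>b\<in>A. \<Sum>k\<le>K. \<Sum>l\<le>K. (w a b * X a k * Y b l) * e ^ (k + l))"
    by (intro sum.cong refl) (simp add: sum_distrib_left sum_distrib_right power_add mult_ac)
  also have "\<dots> = (\<Sum>a\<in>A. \<Sum>b\<in>A. \<Sum>d\<le>2*K. e ^ d * (\<Sum>k\<le>K. \<Sum>l\<le>K. if k + l = d then w a b * X a k * Y b l else 0))"
    by (rule sum.cong[OF refl], rule sum.cong[OF refl], rule regroup)
  also have "\<dots> = (\<Sum>a\<in>A. \<Sum>d\<le>2*K. \<Sum>b\<in>A. e ^ d * (\<Sum>k\<le>K. \<Sum>l\<le>K. if k + l = d then w a b * X a k * Y b l else 0))"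
    by (rule sum.cong[OF refl], rule sum.swap)
  also have "\<dots> = (\<Sum>d\<le>2*K. \<Sum>a\<in>A. \<Sum>b\<in>A. e ^ d * (\<Sum>k\<le>K. \<Sum>l\<le>K. if k + l = d then w a b * X a k * Y b l else 0))"
    by (rule sum.swap)
  also have "\<dots> = (\<Sum>d\<le>2*K. e ^ d * (\<Sum>a\<in>A. \<Sum>b\<in>A. \<Sum>k\<le>K. \<Sum>l\<le>K. if k + l = d then w a b * X a k * Y b l else 0))"
    by (simp add: sum_distrib_left)
  finally show ?thesis .
qed

lemma lim_right_nonneg:
  fixes f :: "real \<Rightarrow> complex"
  assumes lim: "(f \<longlongrightarrow> L) (at 0)" and pos: "\<And>\<epsilon>. \<epsilon> > 0 \<Longrightarrow> Im (f \<epsilon>) = 0 \<and> Re (f \<epsilon>) \<ge> 0"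
  shows "Im L = 0 \<and> Re L \<ge> 0"
proof -
  have limr: "(f \<longlongrightarrow> L) (at_right 0)" using lim filterlim_at_split by blast
  have ev: "\<forall>\<^sub>F \<epsilon> in at_right (0::real). Im (f \<epsilon>) = 0 \<and> Re (f \<epsilon>) \<ge> 0"
    using eventually_at_right_less[of "0::real"] by eventually_elim (use pos in auto)
  have "((\<lambda>\<epsilon>. Re (f \<epsilon>)) \<longlongrightarrow> Re L) (at_right 0)" using limr by (rule tendsto_Re)
  moreover have "((\<lambda>\<epsilon>. Im (f \<epsilon>)) \<longlongrightarrow> Im L) (at_right 0)" using limr by (rule tendsto_Im)
  moreover have "\<forall>\<^sub>F \<epsilon> in at_right (0::real). 0 \<le> Re (f \<epsilon>)" using ev by eventually_elim auto
  moreover have "\<forall>\<^sub>F \<epsilon> in at_right (0::real). 0 \<le> Im (f \<epsilon>)" using ev by eventually_elim auto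
  moreover have "\<forall>\<^sub>F \<epsilon> in at_right (0::real). 0 \<ge> Im (f \<epsilon>)" using ev by eventually_elim auto
  ultimately have "0 \<le> Re L" "0 \<le> Im L" "0 \<ge> Im L"
    by (auto intro: tendsto_lowerbound tendsto_upperbound)
  then show ?thesis by simp
qed

lemma lim_left_nonpos:
  fixes f :: "real \<Rightarrow> complex"
  assumes lim: "(f \<longlongrightarrow> L) (at 0)" and neg: "\<And>\<epsilon>. \<epsilon> < 0 \<Longrightarrow> Re (f \<epsilon>) \<le> 0"
  shows "Re L \<le> 0"
proof -
  have liml: "(f \<longlongrightarrow> L) (at_left 0)" using lim filterlim_at_split by blast
  have ev0: "\<forall>\<^sub>F \<epsilon> in at_left (0::real). \<epsilon> < 0"
  proof -
    have "eventually (\<lambda>x. x \<in> {-1<..<0}) (at_left (0::real))" by (rule eventually_at_left_real) simp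
    then show ?thesis by eventually_elim auto
  qed
  have "\<forall>\<^sub>F \<epsilon> in at_left (0::real). Re (f \<epsilon>) \<le> 0" using ev0 by eventually_elim (use neg in auto)
  moreover have "((\<lambda>\<epsilon>. Re (f \<epsilon>)) \<longlongrightarrow> Re L) (at_left 0)" using liml by (rule tendsto_Re)
  ultimately show ?thesis by (auto intro: tendsto_upperbound)
qed

lemma P1_diag:
  assumes "Pk 1 n s"
  shows "Im (herm_eval n s p p) = 0 \<and> 0 \<le> Re (herm_eval n s p p)"
  using assms unfolding Pk_def
  by (auto dest!: spec[of _ "\<lambda>_. p"] spec[of _ "\<lambda>_. 1"] simp: Let_def)

lemma sum_prod_split: "(\<Sum>i\<in>A \<times> B. f i) = (\<Sum>a\<in>A. \<Sum>b\<in>B. f (a, b))"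
  by (simp add: sum.cartesian_product)

lemma pullback_Q':
  assumes pb: "is_pullback n r zm q" and Q: "Qcl' n r"
  shows "Qcl' 1 q"
proof -
  have Pr: "Pk 1 n r" using Q unfolding Qcl'_def by (rule conjunct1)
  have "\<exists>s N F. Pk 1 n s \<and> (\<exists>\<alpha> \<beta>. s \<alpha> \<beta> \<noteq> 0) \<and> is_hpoly_map n N F \<and>
        (\<forall>z. herm_eval n r z z * herm_eval n s z z = complex_of_real (map_normsq n N F z))"
    using Q unfolding Qcl'_def by (rule conjunct2)
  then obtain s N F where H: "Pk 1 n s \<and> (\<exists>\<alpha> \<beta>. s \<alpha> \<beta> \<noteq> 0) \<and> is_hpoly_map n N F \<and>
        (\<forall>z. herm_eval n r z z * herm_eval n s z z = complex_of_real (map_normsq n N F z))"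
    by (elim exE)
  have Ps: "Pk 1 n s" using H by (rule conjunct1)
  have nzex: "\<exists>\<alpha> \<beta>. s \<alpha> \<beta> \<noteq> 0" using conjunct2[OF H] by (rule conjunct1)
  have hF: "is_hpoly_map n N F" using conjunct2[OF conjunct2[OF H]] by (rule conjunct1)
  have idt0: "\<forall>z. herm_eval n r z z * herm_eval n s z z = complex_of_real (map_normsq n N F z)"
    using conjunct2[OF conjunct2[OF H]] by (rule conjunct2)
  have idt: "herm_eval n r z z * herm_eval n s z z = complex_of_real (map_normsq n N F z)" for z
    using idt0 by (rule spec)
  obtain \<alpha>0 \<beta>0 where nz: "s \<alpha>0 \<beta>0 \<noteq> 0" using nzex by (elim exE)
  have hs: "is_herm n s" using Ps unfolding Pk_def by blast
  obtain p where p: "herm_eval n s p p \<noteq> 0" using herm_nonzero[of n s \<alpha>0 \<beta>0, OF hs nz] by (elim exE)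
  define c where "c i = p i - poly (zm i) 0" for i
  define S where "S = {(\<alpha>, \<beta>). s \<alpha> \<beta> \<noteq> 0}"
  define A where "A = fst ` S \<union> snd ` S"
  have fS: "finite S" using hs unfolding is_herm_def S_def by blast
  then have fA: "finite A" unfolding A_def by simp
  have SA: "S \<subseteq> A \<times> A" unfolding A_def by force
  have sym: "s j i = cnj (s i j)" for i j
  proof -
    have "s i j = cnj (s j i)" using hs unfolding is_herm_def by blast
    then show ?thesis by simp
  qed
  define Mb where "Mb a = monP n a (Gam zm c)" for a
  define K where "K = Max (insert 0 (degree ` Mb ` A))"
  have Kd: "degree (Mb a) \<le> K" if "a \<in> A" for a unfolding K_def using fA that by simp
  define ze where "ze t \<epsilon> = (\<lambda>i. poly (zm i) t + complex_of_real \<epsilon> * c i)" for t \<epsilon>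
  have monoE: "mono n a (ze t \<epsilon>) = (\<Sum>k\<le>K. poly (coeff (Mb a) k) t * of_real \<epsilon> ^ k)" if "a \<in> A" for a t \<epsilon>
  proof -
    have "mono n a (ze t \<epsilon>) = poly (phi t (Mb a)) (of_real \<epsilon>)"
      unfolding ze_def Mb_def poly_phi poly_monP2 poly_Gam ..
    also have "\<dots> = (\<Sum>k\<le>K. coeff (phi t (Mb a)) k * of_real \<epsilon> ^ k)"
      by (rule poly_le) (use Kd[OF that] map_poly_degree_leq[of _ "Mb a"] in \<open>auto simp: phi_def intro: order_trans\<close>)
    finally show ?thesis by (simp add: coeff_phi)
  qed
  define Tv where "Tv d t = (\<Sum>a\<in>A. \<Sum>b\<in>A. \<Sum>k\<le>K. \<Sum>l\<le>K. if k + l = d then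
      s a b * poly (coeff (Mb a) k) t * cnj (poly (coeff (Mb b) l) t) else 0)" for d t
  have expand: "herm_eval n s (ze t \<epsilon>) (ze t \<epsilon>) = (\<Sum>d\<le>2*K. of_real \<epsilon> ^ d * Tv d t)" for t \<epsilon>
  proof -
    have "herm_eval n s (ze t \<epsilon>) (ze t \<epsilon>) = (\<Sum>(a, b)\<in>A \<times> A. s a b * mono n a (ze t \<epsilon>) * cnj (mono n b (ze t \<epsilon>)))"
      by (rule herm_eval_superset) (use fA SA S_def in auto)
    also have "\<dots> = (\<Sum>a\<in>A. \<Sum>b\<in>A. s a b * mono n a (ze t \<epsilon>) * cnj (mono n b (ze t \<epsilon>)))"
      by (simp add: sum.cartesian_product)
    also have "\<dots> = (\<Sum>a\<in>A. \<Sum>b\<in>A. s a b * (\<Sum>k\<le>K. poly (coeff (Mb a) k) t * of_real \<epsilon> ^ k) *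
        (\<Sum>l\<le>K. cnj (poly (coeff (Mb b) l) t) * of_real \<epsilon> ^ l))"
      by (intro sum.cong refl) (simp add: monoE)
    also have "\<dots> = (\<Sum>d\<le>2*K. of_real \<epsilon> ^ d * Tv d t)"
      unfolding Tv_def by (rule expand_sum)
    finally show ?thesis .
  qed
  define Bp where "Bp t = (\<Sum>d\<le>2*K. monom (Tv d t) d)" for t
  have hB: "herm_eval n s (ze t \<epsilon>) (ze t \<epsilon>) = poly (Bp t) (of_real \<epsilon>)" for t \<epsilon>
    unfolding expand Bp_def poly_sum_monoms by (simp add: mult.commute)
  have coeffB: "coeff (Bp t) d = (if d \<le> 2*K then Tv d t else 0)" for t d
    unfolding Bp_def coeff_sum_monoms ..
  have "ze 0 1 = p" unfolding ze_def c_def by auto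
  then have "(\<Sum>d\<le>2*K. of_real 1 ^ d * Tv d 0) \<noteq> 0" using p expand[of 0 1] by simp
  then obtain d0 where d0: "d0 \<le> 2*K" "Tv d0 0 \<noteq> 0" by (metis (no_types, lifting) atMost_iff sum.neutral mult_zero_right)
  define D where "D = (LEAST d. \<exists>t. Tv d t \<noteq> 0)"
  have exd: "\<exists>d t. Tv d t \<noteq> 0" using d0(2) by blast
  have exD: "\<exists>t. Tv D t \<noteq> 0" unfolding D_def using exd by (rule LeastI_ex)
  then obtain t1 where t1: "Tv D t1 \<noteq> 0" by blast
  have "D \<le> d0" unfolding D_def by (rule Least_le) (use d0(2) in blast)
  then have DK: "D \<le> 2*K" using d0(1) by linarith
  have lowD: "Tv d t = 0" if "d < D" for d t
    using not_less_Least[of d "\<lambda>d. \<exists>t. Tv d t \<noteq> 0"] that unfolding D_def by blast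
  have limB: "((\<lambda>\<epsilon>::real. poly (Bp t) (of_real \<epsilon>) / of_real \<epsilon> ^ D) \<longlongrightarrow> Tv D t) (at 0)" for t
  proof -
    have "((\<lambda>\<epsilon>::real. poly (Bp t) (of_real \<epsilon>) / of_real \<epsilon> ^ D) \<longlongrightarrow> coeff (Bp t) D) (at 0)"
      by (rule tendsto_shift) (simp add: coeffB lowD)
    then show ?thesis using DK by (simp add: coeffB)
  qed
  have Bnn: "Im (poly (Bp t) (of_real \<epsilon>)) = 0 \<and> 0 \<le> Re (poly (Bp t) (of_real \<epsilon>))" for t \<epsilon>
    unfolding hB[symmetric] by (rule P1_diag[OF Ps])
  have Bre: "poly (Bp t) (of_real \<epsilon>) = of_real (Re (poly (Bp t) (of_real \<epsilon>)))" for t \<epsilon>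
    using Bnn[of t \<epsilon>] by (simp add: complex_eq_iff)
  have Tnn: "Im (Tv D t) = 0 \<and> 0 \<le> Re (Tv D t)" for t
  proof (rule lim_right_nonneg[OF limB])
    fix \<epsilon> :: real assume "\<epsilon> > 0"
    have E: "poly (Bp t) (of_real \<epsilon>) / of_real \<epsilon> ^ D = of_real (Re (poly (Bp t) (of_real \<epsilon>)) / \<epsilon> ^ D)"
      by (subst Bre) simp
    have X: "Re (poly (Bp t) (of_real \<epsilon>)) / \<epsilon> ^ D \<ge> 0" using Bnn[of t \<epsilon>] \<open>\<epsilon> > 0\<close> by simp
    show "Im (poly (Bp t) (of_real \<epsilon>) / of_real \<epsilon> ^ D) = 0 \<and> 0 \<le> Re (poly (Bp t) (of_real \<epsilon>) / of_real \<epsilon> ^ D)"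
      unfolding E using X by (simp only: Im_complex_of_real Re_complex_of_real)
  qed
  have Dev: "even D"
  proof (rule ccontr)
    assume odd: "odd D"
    have "Re (Tv D t1) \<le> 0"
    proof (rule lim_left_nonpos[OF limB])
      fix \<epsilon> :: real assume "\<epsilon> < 0"
      then have "\<epsilon> ^ D < 0" using odd by (simp add: power_less_zero_eq)
      have E: "poly (Bp t1) (of_real \<epsilon>) / of_real \<epsilon> ^ D = of_real (Re (poly (Bp t1) (of_real \<epsilon>)) / \<epsilon> ^ D)"
        by (subst Bre) simp
      have X: "Re (poly (Bp t1) (of_real \<epsilon>)) / \<epsilon> ^ D \<le> 0"
        using Bnn[of t1 \<epsilon>] \<open>\<epsilon> ^ D < 0\<close> by (simp add: divide_nonneg_neg)
      show "Re (poly (Bp t1) (of_real \<epsilon>) / of_real \<epsilon> ^ D) \<le> 0"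
        unfolding E using X by (simp only: Re_complex_of_real)
    qed
    then have "Tv D t1 = 0" using Tnn[of t1] by (simp add: complex_eq_iff)
    then show False using t1 by simp
  qed
  define m where "m = D div 2"
  have Dm: "D = 2 * m" unfolding m_def using Dev by simp
  define w where "w i j = (if snd i + snd j = D then s (fst i) (fst j) else 0)" for i j :: "mindex \<times> nat"
  define P' where "P' i = coeff (Mb (fst i)) (snd i)" for i :: "mindex \<times> nat"
  define s' where "s' = hc (A \<times> {..K}) w P'"
  have fI: "finite (A \<times> {..K})" using fA by simp
  have wsym: "w j i = cnj (w i j)" for i j unfolding w_def using sym[of "fst i" "fst j"] by (simp add: add.commute)
  have s'herm: "is_herm 1 s'" unfolding s'_def by (rule hc_props(1)[OF fI wsym])
  have s'eval: "herm_eval 1 s' x x = Tv D (x 0)" for x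
  proof -
    have "herm_eval 1 s' x x = (\<Sum>i\<in>A \<times> {..K}. \<Sum>j\<in>A \<times> {..K}. w i j * poly (P' i) (x 0) * cnj (poly (P' j) (x 0)))"
      unfolding s'_def by (rule hc_props(2)[OF fI wsym])
    also have "\<dots> = (\<Sum>a\<in>A. \<Sum>k\<le>K. \<Sum>b\<in>A. \<Sum>l\<le>K. if k + l = D then
      s a b * poly (coeff (Mb a) k) (x 0) * cnj (poly (coeff (Mb b) l) (x 0)) else 0)"
      unfolding sum_prod_split w_def P'_def by (intro sum.cong refl) simp
    also have "\<dots> = Tv D (x 0)" unfolding Tv_def
      by (rule sum.cong[OF refl], rule sum.swap)
    finally show ?thesis .
  qed
  have s'P: "Pk 1 1 s'"
  proof -
    have "let qq = (\<Sum>i<1. \<Sum>j<1. cnj (v i) * herm_eval 1 s' (pts i) (pts j) * v j) in Im qq = 0 \<and> 0 \<le> Re qq"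
      for pts :: "nat \<Rightarrow> nat \<Rightarrow> complex" and v
    proof -
      have T: "Tv D (pts 0 0) = of_real (Re (Tv D (pts 0 0)))" using Tnn by (simp add: complex_eq_iff)
      have "(\<Sum>i<1. \<Sum>j<1. cnj (v i) * herm_eval 1 s' (pts i) (pts j) * v j) =
            of_real ((cmod (v 0))\<^sup>2 * Re (Tv D (pts 0 0)))"
      proof -
        have "(\<Sum>i<1. \<Sum>j<1. cnj (v i) * herm_eval 1 s' (pts i) (pts j) * v j) = (v 0 * cnj (v 0)) * Tv D (pts 0 0)"
          using s'eval[of "pts 0"] by (simp add: mult_ac)
        also have "v 0 * cnj (v 0) = of_real ((cmod (v 0))\<^sup>2)" using complex_norm_square[of "v 0"] by simp
        also note T
        finally show ?thesis by simp
      qed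
      moreover have "0 \<le> (cmod (v 0))\<^sup>2 * Re (Tv D (pts 0 0))" using Tnn by simp
      ultimately show ?thesis by (simp add: Let_def)
    qed
    then show ?thesis unfolding Pk_def using s'herm by blast
  qed
  have s'nz: "\<exists>\<alpha> \<beta>. s' \<alpha> \<beta> \<noteq> 0"
  proof (rule ccontr)
    assume "\<not> (\<exists>\<alpha> \<beta>. s' \<alpha> \<beta> \<noteq> 0)"
    then have "herm_eval 1 s' (\<lambda>_. t1) (\<lambda>_. t1) = 0" unfolding herm_eval_def by simp
    then show False using s'eval[of "\<lambda>_. t1"] t1 by simp
  qed
  define Fb where "Fb j = compB n (F j) (Gam zm c)" for j
  have pF: "poly (phi t (Fb j)) e = hpoly_eval n (F j) (\<lambda>i. poly (zm i) t + e * c i)" for t e j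
    unfolding Fb_def by (rule poly_compB)
  define F' where "F' j = of_upoly (coeff (Fb j) m)" for j
  have hF': "is_hpoly_map 1 N F'" unfolding F'_def by (rule hp_of_upoly_map)
  have main: "herm_eval 1 q z z * herm_eval 1 s' z z = complex_of_real (map_normsq 1 N F' z)" for z
  proof -
    define t where "t = z 0"
    define zt where "zt = (\<lambda>i. poly (zm i) t)"
    define Af where "Af \<epsilon> = herm_eval n r (ze t \<epsilon>) (ze t \<epsilon>)" for \<epsilon> :: real
    define Bf where "Bf \<epsilon> = poly (Bp t) (of_real \<epsilon>)" for \<epsilon> :: real
    have "isCont Af 0" unfolding Af_def ze_def by (rule herm_isCont)
    then have "(Af \<longlongrightarrow> Af 0) (at 0)" by (rule isContD)
    moreover have "Af 0 = herm_eval n r zt zt" unfolding Af_def ze_def zt_def by simp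
    ultimately have Alim: "(Af \<longlongrightarrow> herm_eval n r zt zt) (at 0)" by simp
    have Blim: "((\<lambda>\<epsilon>. Bf \<epsilon> / of_real \<epsilon> ^ (2 * m)) \<longlongrightarrow> Tv D t) (at 0)"
      unfolding Bf_def Dm[symmetric] by (rule limB)
    have eq: "Af \<epsilon> * Bf \<epsilon> = of_real (\<Sum>j<N. (cmod (poly (phi t (Fb j)) (of_real \<epsilon>)))\<^sup>2)" for \<epsilon>
      using idt[of "ze t \<epsilon>"] unfolding Af_def Bf_def hB[symmetric] map_normsq_def pF ze_def by simp
    have "of_real (\<Sum>j<N. (cmod (coeff (phi t (Fb j)) m))\<^sup>2) = herm_eval n r zt zt * Tv D t"
      by (rule core_limit[OF Alim Blim eq])
    moreover have "herm_eval 1 q z z = herm_eval n r zt zt"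
      unfolding pullback_eval[OF pb] zt_def t_def ..
    ultimately show ?thesis
      unfolding F'_def normsq_of_upoly coeff_phi t_def s'eval by simp
  qed
  have "Pk 1 1 q" by (rule pullback_Pk[OF pb Pr])
  then show ?thesis unfolding Qcl'_def using s'P s'nz hF' main by blast
qed

theorem lemma2p1:
  fixes n :: nat and r :: "mindex \<Rightarrow> mindex \<Rightarrow> complex" and zm :: "nat \<Rightarrow> complex poly"
  assumes "is_herm n r"
  shows "(\<exists>q. is_pullback n r zm q) \<and>
    (\<forall>q. is_pullback n r zm q \<longrightarrow>
       (Qcl n r \<longrightarrow> Qcl 1 q) \<and>
       (Qcl' n r \<longrightarrow> Qcl' 1 q) \<and>
       (\<forall>k\<ge>1. Pk k n r \<longrightarrow> Pk k 1 q) \<and>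
       (Pinf n r \<longrightarrow> Pinf 1 q))"
proof -
  have ex: "\<exists>q. is_pullback n r zm q" by (rule pullback_exists[OF assms])
  have all: "(Qcl n r \<longrightarrow> Qcl 1 q) \<and>
       (Qcl' n r \<longrightarrow> Qcl' 1 q) \<and>
       (\<forall>k\<ge>1. Pk k n r \<longrightarrow> Pk k 1 q) \<and>
       (Pinf n r \<longrightarrow> Pinf 1 q)" if pb: "is_pullback n r zm q" for q
  proof -
    have 1: "Qcl n r \<longrightarrow> Qcl 1 q" using pullback_Q[OF pb] by blast
    have 2: "Qcl' n r \<longrightarrow> Qcl' 1 q" using pullback_Q'[OF pb] by blast
    have 3: "\<forall>k\<ge>1. Pk k n r \<longrightarrow> Pk k 1 q" using pullback_Pk[OF pb] by blast
    have 4: "Pinf n r \<longrightarrow> Pinf 1 q" using pullback_Pinf[OF pb] by blast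
    show ?thesis using 1 2 3 4 by blast
  qed
  show ?thesis using ex all by blast
qed

end
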